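(* Let $\rho\in(0,1)$ and $\sigma_x<\sigma_y$. Among all $\mathbf a=(x_1,y_1)$ on the circle $x_1^2+y_1^2=2x_2^{*2}$, the only one with $K(\mathbf a,\mathbf b^* )\le 0$ is $\mathbf a=\mathbf a^*=(-x_2^*,-x_2^* )$.
   Context: Standing setup. Fix $\sigma_x,\sigma_y>0$ and $\rho\in(-1,1)$, and let $(\xi,\eta)$ be a bivariate normal random vector with mean $(0,0)$ and covariance matrix $\Sigma=\begin{pmatrix}\sigma_x^2&\rho\sigma_x\sigma_y\\ \rho\sigma_x\sigma_y&\sigma_y^2\end{pmatrix}$. Player I (the minimizer) chooses $\mathbf a=(x_1,y_1)\in\mathbb R^2$ and Player II (the maximizer) chooses $\mathbf b=(x_2,y_2)\in\mathbb R^2$. Let $C_1(\mathbf a,\mathbf b)=\{(x,y):(x_1-x)^2+(y_1-y)^2<(x_2-x)^2+(y_2-y)^2\}$ and $C_2(\mathbf a,\mathbf b)=\{(x,y):(x_1-x)^2+(y_1-y)^2>(x_2-x)^2+(y_2-y)^2\}$. The payoff to Player II (paid by Player I) is $K(\mathbf a,\mathbf b)=x_1+y_1$ if $\mathbf a=\mathbf b$, and $K(\mathbf a,\mathbf b)=(x_1+y_1)\,P((\xi,\eta)\in C_1(\mathbf a,\mathbf b))+(x_2+y_2)\,P((\xi,\eta)\in C_2(\mathbf a,\mathbf b))$ if $\mathbf a\neq\mathbf b$. For $\mathbf a=(x,y)$ write $-\mathbf a=(-x,-y)$. Let $x_2^*=\frac{\sqrt{2\pi(\sigma_x^2+2\rho\sigma_x\sigma_y+\sigma_y^2)}}{4}$,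 $\mathbf b^*=(x_2^*,x_2^* )$ and $\mathbf a^*=(-x_2^*,-x_2^* )$. *)

theory Defs
  imports "HOL-Probability.Probability"
begin

text \<open>Density of the centred bivariate normal law with standard deviations sx, sy and
  correlation r (covariance matrix [[sx^2, r sx sy],[r sx sy, sy^2]]).\<close>
definition binormal_density :: "real \<Rightarrow> real \<Rightarrow> real \<Rightarrow> real \<times> real \<Rightarrow> real" where
  "binormal_density sx sy r p =
     (let x = fst p; y = snd p in
      exp (- (x\<^sup>2 / sx\<^sup>2 - 2 * r * x * y / (sx * sy) + y\<^sup>2 / sy\<^sup>2) / (2 * (1 - r\<^sup>2)))
      / (2 * pi * sx * sy * sqrt (1 - r\<^sup>2)))"

definition binormal :: "real \<Rightarrow> real \<Rightarrow> real \<Rightarrow> (real \<times> real) measure" where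
  "binormal sx sy r = density lborel (\<lambda>p. ennreal (binormal_density sx sy r p))"

definition C1 :: "real \<times> real \<Rightarrow> real \<times> real \<Rightarrow> (real \<times> real) set" where
  "C1 a b = {p. (fst a - fst p)\<^sup>2 + (snd a - snd p)\<^sup>2 < (fst b - fst p)\<^sup>2 + (snd b - snd p)\<^sup>2}"

definition C2 :: "real \<times> real \<Rightarrow> real \<times> real \<Rightarrow> (real \<times> real) set" where
  "C2 a b = {p. (fst a - fst p)\<^sup>2 + (snd a - snd p)\<^sup>2 > (fst b - fst p)\<^sup>2 + (snd b - snd p)\<^sup>2}"

text \<open>Payoff to Player II.\<close>
definition K :: "real \<Rightarrow> real \<Rightarrow> real \<Rightarrow> real \<times> real \<Rightarrow> real \<times> real \<Rightarrow> real" where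
  "K sx sy r a b =
     (if a = b then fst a + snd a
      else (fst a + snd a) * measure (binormal sx sy r) (C1 a b)
         + (fst b + snd b) * measure (binormal sx sy r) (C2 a b))"

definition x2star :: "real \<Rightarrow> real \<Rightarrow> real \<Rightarrow> real" where
  "x2star sx sy r = sqrt (2 * pi * (sx\<^sup>2 + 2 * r * sx * sy + sy\<^sup>2)) / 4"

end

theory Submission
  imports Defs
begin

lemma bd_pos:
  assumes "sx > 0" "sy > 0" "r\<^sup>2 < 1"
  shows "binormal_density sx sy r p > 0"
  using assms by (simp add: binormal_density_def Let_def)

lemma bd_meas:
  assumes "sx > 0" "sy > 0" "r\<^sup>2 < 1"
  shows "binormal_density sx sy r \<in> borel_measurable borel"
  unfolding binormal_density_def Let_def
  by (rule borel_measurable_continuous_onI) (use assms in \<open>intro continuous_intros; auto\<close>)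

lemma bd_sym: "binormal_density sx sy r (- p) = binormal_density sx sy r p"
  by (simp add: binormal_density_def Let_def)

lemma r2_lt1: "0 < (r::real) \<Longrightarrow> r < 1 \<Longrightarrow> r\<^sup>2 < 1"
  by (simp add: power2_eq_square) (smt (verit) mult_strict_mono mult_less_cancel_left1)

lemma quad_ineq:
  fixes u v r :: real
  assumes "0 < r" "r < 1"
  shows "(u\<^sup>2 + v\<^sup>2) / (1 + r) \<le> (u\<^sup>2 - 2 * r * u * v + v\<^sup>2) / (1 - r\<^sup>2)"
proof -
  have "(1 - r) * (u\<^sup>2 + v\<^sup>2) \<le> u\<^sup>2 - 2 * r * u * v + v\<^sup>2"
  proof -
    have "0 \<le> r * (u - v)\<^sup>2" using assms by simp
    thus ?thesis by (simp add: power2_eq_square algebra_simps)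
  qed
  moreover have "1 - r\<^sup>2 = (1 - r) * (1 + r)" by (simp add: power2_eq_square algebra_simps)
  ultimately show ?thesis using assms
    by (simp add: divide_simps) (smt (verit) mult_left_mono mult.commute mult.assoc)
qed

lemma bd_bound:
  assumes sx: "sx > 0" and sy: "sy > 0" and r: "0 < r" "r < 1"
  defines "s1 \<equiv> sx * sqrt (1 + r)" and "s2 \<equiv> sy * sqrt (1 + r)"
  defines "A \<equiv> sqrt (2 * pi * s1\<^sup>2) * sqrt (2 * pi * s2\<^sup>2) / (2 * pi * sx * sy * sqrt (1 - r\<^sup>2))"
  shows "binormal_density sx sy r (x, y) \<le> A * normal_density 0 s1 x * normal_density 0 s2 y"
proof -
  define u where "u = x / sx"
  define v where "v = y / sy"
  have c: "2 * pi * sx * sy * sqrt (1 - r\<^sup>2) > 0" proof -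
    have "r\<^sup>2 < 1" using r by (simp add: power2_eq_square) (smt (verit) mult_strict_mono mult_less_cancel_left1)
    thus ?thesis using sx sy by simp
  qed
  have e1: "x\<^sup>2 / sx\<^sup>2 = u\<^sup>2" by (simp add: u_def power_divide)
  have e2: "y\<^sup>2 / sy\<^sup>2 = v\<^sup>2" by (simp add: v_def power_divide)
  have e3: "2 * r * x * y / (sx * sy) = 2 * r * u * v" by (simp add: u_def v_def)
  have s1sq: "s1\<^sup>2 = sx\<^sup>2 * (1 + r)" using r by (simp add: s1_def power_mult_distrib)
  have s2sq: "s2\<^sup>2 = sy\<^sup>2 * (1 + r)" using r by (simp add: s2_def power_mult_distrib)
  have E: "- (x\<^sup>2 / sx\<^sup>2 - 2 * r * x * y / (sx * sy) + y\<^sup>2 / sy\<^sup>2) / (2 * (1 - r\<^sup>2))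
      \<le> - (x - 0)\<^sup>2 / (2 * s1\<^sup>2) + - (y - 0)\<^sup>2 / (2 * s2\<^sup>2)"
  proof -
    have eq1: "- (x - 0)\<^sup>2 / (2 * s1\<^sup>2) + - (y - 0)\<^sup>2 / (2 * s2\<^sup>2) = - ((u\<^sup>2 + v\<^sup>2) / (1 + r)) / 2"
    proof -
      have rp: "1 + r > 0" using r by simp
      have "x\<^sup>2 / (2 * s1\<^sup>2) = u\<^sup>2 / (2 * (1 + r))" unfolding s1sq e1[symmetric]
        using sx rp by (simp add: field_simps)
      moreover have "y\<^sup>2 / (2 * s2\<^sup>2) = v\<^sup>2 / (2 * (1 + r))" unfolding s2sq e2[symmetric]
        using sy rp by (simp add: field_simps)
      ultimately show ?thesis using rp by (simp add: field_simps)
    qed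
    have eq2: "- (x\<^sup>2 / sx\<^sup>2 - 2 * r * x * y / (sx * sy) + y\<^sup>2 / sy\<^sup>2) / (2 * (1 - r\<^sup>2))
        = - ((u\<^sup>2 - 2 * r * u * v + v\<^sup>2) / (1 - r\<^sup>2)) / 2"
      unfolding e1 e2 e3 by (simp add: divide_simps)
    show ?thesis unfolding eq1 eq2
      by (intro divide_right_mono) (use quad_ineq[OF r, of u v] in auto)
  qed
  have s12: "s1 \<noteq> 0" "s2 \<noteq> 0" using sx sy r by (auto simp: s1_def s2_def)
  have pos1: "sqrt (2 * pi * s1\<^sup>2) > 0" "sqrt (2 * pi * s2\<^sup>2) > 0" using sx sy r
    by (auto simp: s1sq s2sq)
  have "binormal_density sx sy r (x, y) = exp (- (x\<^sup>2 / sx\<^sup>2 - 2 * r * x * y / (sx * sy) + y\<^sup>2 / sy\<^sup>2) / (2 * (1 - r\<^sup>2)))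
      / (2 * pi * sx * sy * sqrt (1 - r\<^sup>2))"
    by (simp add: binormal_density_def)
  also have "\<dots> \<le> exp (- (x - 0)\<^sup>2 / (2 * s1\<^sup>2) + - (y - 0)\<^sup>2 / (2 * s2\<^sup>2)) / (2 * pi * sx * sy * sqrt (1 - r\<^sup>2))"
    using c E by (intro divide_right_mono) auto
  also have "\<dots> = A * normal_density 0 s1 x * normal_density 0 s2 y"
    using pos1 c s12 unfolding A_def normal_density_def exp_add by (simp add: field_simps)
  finally show ?thesis .
qed

lemma nd_int1: "0 < s \<Longrightarrow> (\<integral>\<^sup>+x. ennreal (normal_density m s x) \<partial>lborel) = 1"
  by (subst nn_integral_eq_integral) (auto intro: integrable_normal_density)

lemma bd_finite:
  assumes sx: "sx > 0" and sy: "sy > 0" and r: "0 < r" "r < 1"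
  shows "(\<integral>\<^sup>+p. ennreal (binormal_density sx sy r p) \<partial>lborel) < \<infinity>"
proof -
  define s1 where "s1 = sx * sqrt (1 + r)"
  define s2 where "s2 = sy * sqrt (1 + r)"
  define A where "A = sqrt (2 * pi * s1\<^sup>2) * sqrt (2 * pi * s2\<^sup>2) / (2 * pi * sx * sy * sqrt (1 - r\<^sup>2))"
  have s12: "s1 > 0" "s2 > 0" using sx sy r by (auto simp: s1_def s2_def)
  have "(\<integral>\<^sup>+p. ennreal (binormal_density sx sy r p) \<partial>lborel)
      \<le> (\<integral>\<^sup>+p. ennreal A * ennreal (normal_density 0 s1 (fst p)) * ennreal (normal_density 0 s2 (snd p)) \<partial>lborel)"
  proof (rule nn_integral_mono)
    fix p :: "real \<times> real"
    obtain x y where p: "p = (x, y)" by (cases p)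
    have "A \<ge> 0" unfolding A_def using sx sy r r2_lt1[OF r] by (auto intro!: divide_nonneg_pos mult_pos_pos)
    then show "ennreal (binormal_density sx sy r p) \<le> ennreal A * ennreal (normal_density 0 s1 (fst p)) * ennreal (normal_density 0 s2 (snd p))"
      using bd_bound[OF sx sy r, of x y] unfolding p s1_def[symmetric] s2_def[symmetric] A_def[symmetric]
      by (simp add: ennreal_mult'[symmetric] ennreal_leI)
  qed
  also have "\<dots> = (\<integral>\<^sup>+p. ennreal A * ennreal (normal_density 0 s1 (fst p)) * ennreal (normal_density 0 s2 (snd p)) \<partial>(lborel \<Otimes>\<^sub>M lborel))"
    by (simp add: lborel_prod)
  also have "\<dots> = (\<integral>\<^sup>+x. \<integral>\<^sup>+y. ennreal A * ennreal (normal_density 0 s1 x) * ennreal (normal_density 0 s2 y) \<partial>lborel \<partial>lborel)"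
    by (subst lborel.nn_integral_fst[symmetric]) auto
  also have "\<dots> = (\<integral>\<^sup>+x. ennreal A * ennreal (normal_density 0 s1 x) \<partial>lborel)"
    by (simp add: nn_integral_cmult nd_int1[OF s12(2)])
  also have "\<dots> = ennreal A"
    by (simp add: nn_integral_cmult nd_int1[OF s12(1)])
  finally show ?thesis by (simp add: le_less_trans)
qed

lemma open_hp: "open {p::real\<times>real. w1 * fst p + w2 * snd p < 0}"
  by (intro open_Collect_less continuous_intros)

lemma open_hp2: "open {p::real\<times>real. 0 < w1 * fst p + w2 * snd p}"
  by (intro open_Collect_less continuous_intros)

lemma lborel_uminus2: "distr lborel borel uminus = (lborel :: (real \<times> real) measure)"
  by (subst lborel_affine[of "-1" 0]) (auto simp: density_1 one_ennreal_def[symmetric])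

lemma hp_sym:
  assumes "sx > 0" "sy > 0" "0 < r" "r < 1"
  shows "emeasure (binormal sx sy r) {p. 0 < w1 * fst p + w2 * snd p}
       = emeasure (binormal sx sy r) {p. w1 * fst p + w2 * snd p < 0}"
proof -
  note m[measurable] = bd_meas[of sx sy r, OF assms(1,2) r2_lt1[OF assms(3,4)]]
  have s1[measurable]: "{p::real\<times>real. 0 < w1 * fst p + w2 * snd p} \<in> sets borel"
    using open_hp2 by auto
  have s2[measurable]: "{p::real\<times>real. w1 * fst p + w2 * snd p < 0} \<in> sets borel"
    using open_hp by auto
  have "emeasure (binormal sx sy r) {p. 0 < w1 * fst p + w2 * snd p}
     = (\<integral>\<^sup>+p. ennreal (binormal_density sx sy r p) * indicator {p. 0 < w1 * fst p + w2 * snd p} p \<partial>lborel)"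
    unfolding binormal_def by (subst emeasure_density) auto
  also have "\<dots> = (\<integral>\<^sup>+p. ennreal (binormal_density sx sy r p) * indicator {p. 0 < w1 * fst p + w2 * snd p} p \<partial>(distr lborel borel uminus))"
    by (simp add: lborel_uminus2)
  also have "\<dots> = (\<integral>\<^sup>+p. ennreal (binormal_density sx sy r (- p)) * indicator {p. 0 < w1 * fst p + w2 * snd p} (- p) \<partial>lborel)"
    by (subst nn_integral_distr) auto
  also have "\<dots> = (\<integral>\<^sup>+p. ennreal (binormal_density sx sy r p) * indicator {p. w1 * fst p + w2 * snd p < 0} p \<partial>lborel)"
    by (intro nn_integral_cong) (auto simp: bd_sym indicator_def)
  also have "\<dots> = emeasure (binormal sx sy r) {p. w1 * fst p + w2 * snd p < 0}"
    unfolding binormal_def by (subst emeasure_density) auto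
  finally show ?thesis .
qed

lemma open_pos:
  fixes S :: "(real \<times> real) set"
  assumes "open S" "q \<in> S"
  shows "0 < emeasure lborel S"
proof -
  obtain a b where ab: "box a b \<subseteq> S" "q \<in> box a b" "\<forall>i\<in>Basis. a \<bullet> i < b \<bullet> i"
    using open_contains_box[OF assms] by blast
  have "0 < emeasure lborel (box a b)"
  proof -
    have "\<forall>i\<in>Basis. 0 < (b - a) \<bullet> i" using ab(3) by (simp add: inner_diff_left)
    then show ?thesis using ab(3) by (simp add: emeasure_lborel_box_eq less_imp_le prod_pos)
  qed
  also have "\<dots> \<le> emeasure lborel S"
    using ab(1) assms(1) by (intro emeasure_mono) auto
  finally show ?thesis .
qed

lemma hp_pos:
  assumes "sx > 0" "sy > 0" "0 < r" "r < 1" and S: "open S" "q \<in> S"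
  shows "0 < emeasure (binormal sx sy r) S"
proof (rule ccontr)
  note m[measurable] = bd_meas[of sx sy r, OF assms(1,2) r2_lt1[OF assms(3,4)]]
  have [measurable]: "S \<in> sets borel" using S by auto
  assume "\<not> 0 < emeasure (binormal sx sy r) S"
  then have "emeasure (binormal sx sy r) S = 0" by (simp add: zero_less_iff_neq_zero)
  then have "(\<integral>\<^sup>+p. ennreal (binormal_density sx sy r p) * indicator S p \<partial>lborel) = 0"
    unfolding binormal_def by (subst (asm) emeasure_density) auto
  then have "AE p in lborel. ennreal (binormal_density sx sy r p) * indicator S p = 0"
    by (subst (asm) nn_integral_0_iff_AE) auto
  then have "AE p in lborel. p \<notin> S"
  proof -
    have fp: "ennreal (binormal_density sx sy r p) \<noteq> 0" for p
      using bd_pos[OF assms(1,2) r2_lt1[OF assms(3,4)], of p] by simp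
    show ?thesis using \<open>AE p in lborel. _\<close> by (rule AE_mp) (auto intro!: AE_I2 simp: indicator_def fp)
  qed
  then have "emeasure lborel S = 0"
    by (subst (asm) AE_iff_measurable[of S]) auto
  with open_pos[OF S] show False by simp
qed

lemma hp_fin:
  assumes "sx > 0" "sy > 0" "0 < r" "r < 1" and S: "S \<in> sets borel"
  shows "emeasure (binormal sx sy r) S < \<infinity>"
proof -
  note m[measurable] = bd_meas[of sx sy r, OF assms(1,2) r2_lt1[OF assms(3,4)]]
  have "emeasure (binormal sx sy r) S = (\<integral>\<^sup>+p. ennreal (binormal_density sx sy r p) * indicator S p \<partial>lborel)"
    unfolding binormal_def using S by (subst emeasure_density) auto
  also have "\<dots> \<le> (\<integral>\<^sup>+p. ennreal (binormal_density sx sy r p) \<partial>lborel)"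
    by (intro nn_integral_mono) (auto simp: indicator_def)
  also have "\<dots> < \<infinity>" by (rule bd_finite[OF assms(1-4)])
  finally show ?thesis .
qed

lemma circle_ineq:
  fixes x1 y1 c :: real
  assumes "c > 0" "x1\<^sup>2 + y1\<^sup>2 = 2 * c\<^sup>2"
  shows "x1 + y1 + 2 * c \<le> 0 \<longleftrightarrow> x1 = - c \<and> y1 = - c"
proof
  assume h: "x1 + y1 + 2 * c \<le> 0"
  have "(x1 + y1)\<^sup>2 + (x1 - y1)\<^sup>2 = 4 * c\<^sup>2" using assms(2) by (simp add: power2_eq_square algebra_simps)
  moreover have "(x1 + y1)\<^sup>2 \<ge> (2 * c)\<^sup>2"
  proof -
    have "(2 * c)\<^sup>2 \<le> (-(x1 + y1))\<^sup>2" using h assms(1) by (intro power_mono) auto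
    then show ?thesis by (simp only: power2_minus)
  qed
  ultimately have "(x1 - y1)\<^sup>2 \<le> 0" by (simp add: power2_eq_square)
  then have "x1 = y1" by simp
  moreover have "x1 + y1 = - 2 * c" using h \<open>(x1 + y1)\<^sup>2 + (x1 - y1)\<^sup>2 = 4 * c\<^sup>2\<close> \<open>x1 = y1\<close> assms(1)
  proof -
    have "x1\<^sup>2 = c\<^sup>2" using \<open>(x1 + y1)\<^sup>2 + (x1 - y1)\<^sup>2 = 4 * c\<^sup>2\<close> \<open>x1 = y1\<close>
      by (simp add: power2_eq_square)
    then have "x1 = c \<or> x1 = - c" by (simp add: power2_eq_iff)
    then show ?thesis using h \<open>x1 = y1\<close> assms(1) by auto
  qed
  ultimately show "x1 = - c \<and> y1 = - c" by simp
next
  assume "x1 = - c \<and> y1 = - c" then show "x1 + y1 + 2 * c \<le> 0" by simp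
qed

theorem mainTheorem11:
  fixes sx sy r x1 y1 :: real
  assumes "sx > 0" and "sy > 0" and "0 < r" and "r < 1" and "sx < sy"
    and "x1\<^sup>2 + y1\<^sup>2 = 2 * (x2star sx sy r)\<^sup>2"
  shows "K sx sy r (x1, y1) (x2star sx sy r, x2star sx sy r) \<le> 0
         \<longleftrightarrow> (x1, y1) = (- x2star sx sy r, - x2star sx sy r)"
proof -
  define c where "c = x2star sx sy r"
  have cpos: "c > 0"
  proof -
    have "0 < sx\<^sup>2 + 2 * r * sx * sy + sy\<^sup>2" using assms(1-3) by (intro add_pos_pos) auto
    then show ?thesis unfolding c_def x2star_def by simp
  qed
  have circ: "x1\<^sup>2 + y1\<^sup>2 = 2 * c\<^sup>2" using assms(6) unfolding c_def .
  have "K sx sy r (x1, y1) (c, c) \<le> 0 \<longleftrightarrow> (x1, y1) = (- c, - c)"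
  proof (cases "(x1, y1) = (c, c)")
    case True
    then show ?thesis using cpos by (auto simp: K_def)
  next
    case False
    define w1 where "w1 = c - x1"
    define w2 where "w2 = c - y1"
    have wne: "w1 \<noteq> 0 \<or> w2 \<noteq> 0" using False by (auto simp: w1_def w2_def)
    have eqC1: "C1 (x1, y1) (c, c) = {p. w1 * fst p + w2 * snd p < 0}"
      unfolding C1_def w1_def w2_def using circ
      by (auto simp: power2_eq_square algebra_simps)
    have eqC2: "C2 (x1, y1) (c, c) = {p. 0 < w1 * fst p + w2 * snd p}"
      unfolding C2_def w1_def w2_def using circ
      by (auto simp: power2_eq_square algebra_simps)
    define m where "m = measure (binormal sx sy r) {p. w1 * fst p + w2 * snd p < 0}"
    have m2: "measure (binormal sx sy r) {p. 0 < w1 * fst p + w2 * snd p} = m"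
      unfolding m_def measure_def using hp_sym[OF assms(1-4)] by simp
    have mpos: "m > 0"
    proof -
      have q: "(-w1, -w2) \<in> {p::real\<times>real. w1 * fst p + w2 * snd p < 0}"
      proof -
        have "0 < w1\<^sup>2 + w2\<^sup>2" using wne by (auto intro: add_pos_nonneg add_nonneg_pos)
        then show ?thesis by (simp add: power2_eq_square)
      qed
      have "0 < emeasure (binormal sx sy r) {p. w1 * fst p + w2 * snd p < 0}"
        by (rule hp_pos[OF assms(1-4) open_hp q])
      moreover have "emeasure (binormal sx sy r) {p. w1 * fst p + w2 * snd p < 0} < \<infinity>"
        using open_hp by (intro hp_fin[OF assms(1-4)]) auto
      ultimately show ?thesis unfolding m_def measure_def by (simp add: enn2real_positive_iff)
    qed
    have "K sx sy r (x1, y1) (c, c) = m * (x1 + y1 + 2 * c)"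
      by (simp only: K_def if_not_P[OF False] eqC1 eqC2 m2 m_def[symmetric] fst_conv snd_conv)
        (simp add: algebra_simps)
    then have "K sx sy r (x1, y1) (c, c) \<le> 0 \<longleftrightarrow> x1 + y1 + 2 * c \<le> 0"
      using mpos by (simp add: mult_le_0_iff)
    also have "\<dots> \<longleftrightarrow> x1 = - c \<and> y1 = - c" by (rule circle_ineq[OF cpos circ])
    finally show ?thesis by simp
  qed
  then show ?thesis by (simp add: c_def)
qed

end
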